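(* Let $\mathcal{H}=(\mathcal{T},\mathsf{SO})$ be a history and let $\mathcal{G}$ be the hyper-polygraph of $\mathcal{H}$. Then $\mathcal{H}$ satisfies Snapshot Isolation if and only if $\mathcal{H}$ satisfies $\textsc{Int}$ and there exists a directed labeled graph compatible with $\mathcal{G}$ whose induced SI graph is acyclic.
   Context: Fix sets $\mathsf{Key}$ of keys and $\mathsf{Val}$ of values. An operation is a read $\mathsf{R}(x,v)$ or write $\mathsf{W}(x,v)$ ($x\in\mathsf{Key}$, $v\in\mathsf{Val}$, each with a unique identifier). A transaction is $(O,\mathsf{po})$ with $O$ a finite non-empty set of operations and $\mathsf{po}$ a strict total order on $O$. A history $\mathcal{H}=(\mathcal{T},\mathsf{SO})$: $\mathcal{T}$ a set of transactions with disjoint operation sets, $\mathsf{SO}$ a union of strict total orders on disjoint subsets of $\mathcal{T}$; it contains a transaction $T_\bot$ writing the initial value of every key and $\mathsf{SO}$-preceding all other transactions. $T\vdash\mathsf{W}(x,v)$: $T$ writes $x$ and its $\mathsf{po}$-last write to $x$ has value $v$. $T\vdash\mathsf{R}(x,v)$: $T$ reads $x$ before any write of $T$ to $x$ and the first such read returns $v$. $\mathsf{WriteTx}_x=\{T\mid T\vdash\mathsf{W}(x,\_)\}$. $\textsc{Int}$: in every transaction, every read of $x$ that is $\mathsf{po}$-preceded by an operation on $x$ returns the value of the $\mathsf{po}$-latest such preceding operation. Dependency graph: $(\mathcal{T},\mathsf{SO},\mathsf{WR},\mathsf{WW},\mathsf{RW})$ with, for each key $x$: $\mathsf{WR}(x)\subseteq\mathcal{T}\times\mathcal{T}$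 such that every $S$ with $S\vdash\mathsf{R}(x,\_)$ has exactly one $T$ with $(T,S)\in\mathsf{WR}(x)$, and $(T,S)\in\mathsf{WR}(x)$ implies $T\neq S$ and $T\vdash\mathsf{W}(x,v)$, $S\vdash\mathsf{R}(x,v)$ for some $v$; $\mathsf{WW}(x)$ a strict total order on $\mathsf{WriteTx}_x$; $(T,S)\in\mathsf{RW}(x)$ iff $T\neq S$ and there is $T'$ with $(T',T)\in\mathsf{WR}(x)$ and $(T',S)\in\mathsf{WW}(x)$. Snapshot Isolation is taken (following Cerone and Gotsman) as: $\mathcal{H}$ satisfies SI iff $\mathcal{H}\models\textsc{Int}$ and there is a dependency graph extending $\mathcal{H}$ such that $(\mathsf{SO}\cup\mathsf{WR}\cup\mathsf{WW})\,;\,\mathsf{RW}^{?}$ is acyclic, where $\mathsf{WR},\mathsf{WW},\mathsf{RW}$ denote unions over keys, $;$ is relational composition and $R^{?}$ is the reflexive closure. Hyper-polygraph of $\mathcal{H}$: $\mathcal{G}=(\mathcal{V},\mathcal{E},(\mathcal{C}^{\mathsf{WW}},\mathcal{C}^{\mathsf{WR}}))$, $\mathcal{V}=\mathcal{T}$; edges $T\xrightarrow{\mathsf{t}(x)}S$ with type $\mathsf{t}\in\{\mathsf{SO},\mathsf{WR},\mathsf{WW},\mathsf{RW}\}$ and key $x$; $\mathcal{E}$ contains $T\xrightarrow{\mathsf{SO}}S$ for $(T,S)\in\mathsf{SO}$ and $T\xrightarrow{\mathsf{WR}(x)}S$ whenever $S\vdash\mathsf{R}(x,v)$ and $T$ is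 the unique transaction with $T\vdash\mathsf{W}(x,v)$; $\mathcal{C}^{\mathsf{WW}}=\{\{T\xrightarrow{\mathsf{WW}(x)}S,S\xrightarrow{\mathsf{WW}(x)}T\}\mid T\neq S\in\mathsf{WriteTx}_x\}$; $\mathcal{C}^{\mathsf{WR}}=\{\{T_i\xrightarrow{\mathsf{WR}(x)}S\mid T_i\vdash\mathsf{W}(x,v)\}\mid S\vdash\mathsf{R}(x,v)\}$. A graph $(\mathcal{V}',\mathcal{E}')$ is compatible with $\mathcal{G}$ if $\mathcal{V}'=\mathcal{V}$, $\mathcal{E}'\supseteq\mathcal{E}$, for all $x$ and $T,T',S$ with $T\neq S$: $T'\xrightarrow{\mathsf{WR}(x)}T\in\mathcal{E}'$ and $T'\xrightarrow{\mathsf{WW}(x)}S\in\mathcal{E}'$ imply $T\xrightarrow{\mathsf{RW}(x)}S\in\mathcal{E}'$, and $|\mathcal{E}'\cap C|=1$ for every $C\in\mathcal{C}^{\mathsf{WW}}\cup\mathcal{C}^{\mathsf{WR}}$. For such a graph, writing $\mathcal{E}'_{\mathsf{t}}\subseteq\mathcal{V}'\times\mathcal{V}'$ for the vertex pairs joined by an edge of type $\mathsf{t}$ (ignoring keys), its induced SI graph is $(\mathcal{V}',(\mathcal{E}'_{\mathsf{SO}}\cup\mathcal{E}'_{\mathsf{WR}}\cup\mathcal{E}'_{\mathsf{WW}})\,;\,\mathcal{E}'^{?}_{\mathsf{RW}})$. Acyclic means no directed cycle (including self-loops). *)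

theory Defs
  imports Main
begin

text \<open>An operation is a read or a write of a key with a value, carrying a unique
identifier (the nat). Keys are the elements of the type 'k, values of the type 'v.\<close>
datatype ('k, 'v) op = Rd nat 'k 'v | Wr nat 'k 'v

fun op_key :: "('k, 'v) op \<Rightarrow> 'k" where
  "op_key (Rd _ x _) = x" | "op_key (Wr _ x _) = x"

fun op_val :: "('k, 'v) op \<Rightarrow> 'v" where
  "op_val (Rd _ _ v) = v" | "op_val (Wr _ _ v) = v"

fun is_rd :: "('k, 'v) op \<Rightarrow> bool" where
  "is_rd (Rd _ _ _) = True" | "is_rd (Wr _ _ _) = False"

fun is_wr :: "('k, 'v) op \<Rightarrow> bool" where
  "is_wr (Rd _ _ _) = False" | "is_wr (Wr _ _ _) = True"

text \<open>A transaction (O, po) is represented by the list of its operations in po order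
(a nonempty list without repetitions): O = set T and po = list order.\<close>
type_synonym ('k, 'v) txn = "('k, 'v) op list"

definition writes :: "('k, 'v) txn \<Rightarrow> 'k \<Rightarrow> 'v \<Rightarrow> bool" where
  "writes T x v \<longleftrightarrow>
     (let ws = filter (\<lambda>p. is_wr p \<and> op_key p = x) T in ws \<noteq> [] \<and> op_val (last ws) = v)"

definition reads :: "('k, 'v) txn \<Rightarrow> 'k \<Rightarrow> 'v \<Rightarrow> bool" where
  "reads T x v \<longleftrightarrow>
     (let rs = filter (\<lambda>p. is_rd p \<and> op_key p = x)
                 (takeWhile (\<lambda>p. \<not> (is_wr p \<and> op_key p = x)) T)
      in rs \<noteq> [] \<and> op_val (hd rs) = v)"

definition WriteTx :: "('k, 'v) txn set \<Rightarrow> 'k \<Rightarrow> ('k, 'v) txn set" where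
  "WriteTx Ts x = {T \<in> Ts. \<exists>v. writes T x v}"

definition history :: "('k, 'v) txn set \<Rightarrow> ('k, 'v) txn rel \<Rightarrow> bool" where
  "history Ts SO \<longleftrightarrow>
     (\<forall>T\<in>Ts. T \<noteq> [] \<and> distinct T) \<and>
     (\<forall>T\<in>Ts. \<forall>S\<in>Ts. T \<noteq> S \<longrightarrow> set T \<inter> set S = {}) \<and>
     (\<exists>Tbot\<in>Ts. (\<forall>x. \<exists>v. writes Tbot x v) \<and>
        (\<exists>Sess R. (\<forall>A\<in>Sess. A \<subseteq> Ts - {Tbot}) \<and>
           (\<forall>A\<in>Sess. \<forall>B\<in>Sess. A \<noteq> B \<longrightarrow> A \<inter> B = {}) \<and>
           (\<forall>A\<in>Sess. R A \<subseteq> A \<times> A \<and> strict_linear_order_on A (R A)) \<and>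
           SO = {(Tbot, T) | T. T \<in> Ts \<and> T \<noteq> Tbot} \<union> (\<Union>A\<in>Sess. R A)))"

definition Int_axiom :: "('k, 'v) txn set \<Rightarrow> bool" where
  "Int_axiom Ts \<longleftrightarrow>
     (\<forall>T\<in>Ts. \<forall>i j. j < i \<and> i < length T \<and> is_rd (T ! i) \<and>
        op_key (T ! j) = op_key (T ! i) \<and>
        (\<forall>k. j < k \<and> k < i \<longrightarrow> op_key (T ! k) \<noteq> op_key (T ! i))
        \<longrightarrow> op_val (T ! i) = op_val (T ! j))"

definition RW_of :: "('k \<Rightarrow> ('k, 'v) txn rel) \<Rightarrow> ('k \<Rightarrow> ('k, 'v) txn rel) \<Rightarrow> 'k \<Rightarrow> ('k, 'v) txn rel" where
  "RW_of WR WW x = {(T, S). T \<noteq> S \<and> (\<exists>T'. (T', T) \<in> WR x \<and> (T', S) \<in> WW x)}"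

definition dep_graph :: "('k, 'v) txn set \<Rightarrow> ('k \<Rightarrow> ('k, 'v) txn rel) \<Rightarrow> ('k \<Rightarrow> ('k, 'v) txn rel) \<Rightarrow> bool" where
  "dep_graph Ts WR WW \<longleftrightarrow>
     (\<forall>x. WR x \<subseteq> Ts \<times> Ts) \<and>
     (\<forall>x. \<forall>S\<in>Ts. (\<exists>v. reads S x v) \<longrightarrow> (\<exists>!T. (T, S) \<in> WR x)) \<and>
     (\<forall>x T S. (T, S) \<in> WR x \<longrightarrow> T \<noteq> S \<and> (\<exists>v. writes T x v \<and> reads S x v)) \<and>
     (\<forall>x. WW x \<subseteq> WriteTx Ts x \<times> WriteTx Ts x \<and> strict_linear_order_on (WriteTx Ts x) (WW x))"

definition SI :: "('k, 'v) txn set \<Rightarrow> ('k, 'v) txn rel \<Rightarrow> bool" where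
  "SI Ts SO \<longleftrightarrow> Int_axiom Ts \<and>
     (\<exists>WR WW. dep_graph Ts WR WW \<and>
        acyclic ((SO \<union> (\<Union>x. WR x) \<union> (\<Union>x. WW x)) O (\<Union>x. RW_of WR WW x)\<^sup>=))"

datatype 'k etype = ESO | EWR 'k | EWW 'k | ERW 'k

text \<open>A labeled edge T --t(x)--> S is the triple (T, t(x), S).\<close>
type_synonym ('k, 'v) edge = "('k, 'v) txn \<times> 'k etype \<times> ('k, 'v) txn"

record ('k, 'v) hyper_polygraph =
  hp_V :: "('k, 'v) txn set"
  hp_E :: "('k, 'v) edge set"
  hp_CWW :: "('k, 'v) edge set set"
  hp_CWR :: "('k, 'v) edge set set"

definition hyper_polygraph_of :: "('k, 'v) txn set \<Rightarrow> ('k, 'v) txn rel \<Rightarrow> ('k, 'v) hyper_polygraph" where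
  "hyper_polygraph_of Ts SO =
     \<lparr> hp_V = Ts,
       hp_E = {(T, ESO, S) | T S. (T, S) \<in> SO} \<union>
              {(T, EWR x, S) | T x S. S \<in> Ts \<and> (\<exists>v. reads S x v \<and>
                  T \<in> Ts \<and> writes T x v \<and> (\<forall>T'\<in>Ts. writes T' x v \<longrightarrow> T' = T))},
       hp_CWW = {{(T, EWW x, S), (S, EWW x, T)} | T S x.
                   T \<noteq> S \<and> T \<in> WriteTx Ts x \<and> S \<in> WriteTx Ts x},
       hp_CWR = {{(Ti, EWR x, S) | Ti. Ti \<in> Ts \<and> writes Ti x v} | S x v.
                   S \<in> Ts \<and> reads S x v} \<rparr>"

definition compatible :: "('k, 'v) hyper_polygraph \<Rightarrow> ('k, 'v) txn set \<times> ('k, 'v) edge set \<Rightarrow> bool" where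
  "compatible G VE \<longleftrightarrow>
     (case VE of (V', E') \<Rightarrow>
        V' = hp_V G \<and>
        (\<forall>(T, l, S)\<in>E'. T \<in> V' \<and> S \<in> V') \<and>
        hp_E G \<subseteq> E' \<and>
        (\<forall>x T T' S. T \<noteq> S \<and> (T', EWR x, T) \<in> E' \<and> (T', EWW x, S) \<in> E' \<longrightarrow> (T, ERW x, S) \<in> E') \<and>
        (\<forall>C \<in> hp_CWW G \<union> hp_CWR G. \<exists>!e. e \<in> E' \<inter> C))"

definition E_SO :: "('k, 'v) edge set \<Rightarrow> ('k, 'v) txn rel" where
  "E_SO E = {(T, S). (T, ESO, S) \<in> E}"
definition E_WR :: "('k, 'v) edge set \<Rightarrow> ('k, 'v) txn rel" where
  "E_WR E = {(T, S). \<exists>x. (T, EWR x, S) \<in> E}"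
definition E_WW :: "('k, 'v) edge set \<Rightarrow> ('k, 'v) txn rel" where
  "E_WW E = {(T, S). \<exists>x. (T, EWW x, S) \<in> E}"
definition E_RW :: "('k, 'v) edge set \<Rightarrow> ('k, 'v) txn rel" where
  "E_RW E = {(T, S). \<exists>x. (T, ERW x, S) \<in> E}"

definition induced_SI_graph :: "('k, 'v) txn set \<times> ('k, 'v) edge set \<Rightarrow> ('k, 'v) txn set \<times> ('k, 'v) txn rel" where
  "induced_SI_graph VE = (case VE of (V', E') \<Rightarrow>
     (V', (E_SO E' \<union> E_WR E' \<union> E_WW E') O (E_RW E')\<^sup>=))"

end

theory Submission
  imports Defs
begin

lemma reads_fun: "reads S x v \<Longrightarrow> reads S x w \<Longrightarrow> v = w"
  by (simp add: reads_def Let_def)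

lemma acyc_self: "acyclic r \<Longrightarrow> (a,a) \<in> r \<Longrightarrow> False"
  by (auto simp: acyclic_def)

lemma acyc_2: "acyclic r \<Longrightarrow> (a,b) \<in> r \<Longrightarrow> (b,a) \<in> r \<Longrightarrow> False"
  unfolding acyclic_def by (meson r_into_trancl trancl_into_trancl)

lemma acyc_3: "acyclic r \<Longrightarrow> (a,b) \<in> r \<Longrightarrow> (b,c) \<in> r \<Longrightarrow> (c,a) \<in> r \<Longrightarrow> False"
  unfolding acyclic_def by (meson r_into_trancl trancl_into_trancl)

lemma history_SO: "history Ts SO \<Longrightarrow> SO \<subseteq> Ts \<times> Ts"
  unfolding history_def by blast

lemma si_back:
  assumes comp: "compatible (hyper_polygraph_of Ts SO) (V,E)"
    and ac: "acyclic (snd (induced_SI_graph (V,E)))"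
    and int: "Int_axiom Ts"
  shows "SI Ts SO"
proof -
  let ?G = "hyper_polygraph_of Ts SO"
  let ?R = "(E_SO E \<union> E_WR E \<union> E_WW E) O (E_RW E)\<^sup>="
  have acR: "acyclic ?R" using ac by (simp add: induced_SI_graph_def)
  have cc: "hp_E ?G \<subseteq> E \<and>
     (\<forall>x T T' S. T \<noteq> S \<and> (T', EWR x, T) \<in> E \<and> (T', EWW x, S) \<in> E \<longrightarrow> (T, ERW x, S) \<in> E) \<and>
     (\<forall>C \<in> hp_CWW ?G \<union> hp_CWR ?G. \<exists>!e. e \<in> E \<inter> C)"
    using comp unfolding compatible_def prod.case by (elim conjE) (intro conjI; assumption)
  have hE: "hp_E ?G \<subseteq> E" using cc by blast
  have rw: "\<And>x T T' S. T\<noteq>S \<Longrightarrow> (T',EWR x,T)\<in>E \<Longrightarrow> (T',EWW x,S)\<in>E \<Longrightarrow> (T,ERW x,S)\<in>E"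
    using cc by blast
  have one: "\<And>C. C \<in> hp_CWW ?G \<union> hp_CWR ?G \<Longrightarrow> \<exists>!e. e\<in>E \<inter> C"
    using cc by blast
  have wwR: "(T,S)\<in>?R" if "(T,EWW x,S)\<in>E" for T x S
  proof (rule relcompI[where b=S])
    show "(T,S) \<in> E_SO E \<union> E_WR E \<union> E_WW E" using that by (auto simp: E_WW_def)
  qed simp
  have wrR: "(T,S)\<in>?R" if "(T,EWR x,S)\<in>E" for T x S
  proof (rule relcompI[where b=S])
    show "(T,S) \<in> E_SO E \<union> E_WR E \<union> E_WW E" using that by (auto simp: E_WR_def)
  qed simp
  define WR where "WR x = {(T,S). T\<in>Ts \<and> S\<in>Ts \<and> (\<exists>v. reads S x v \<and> writes T x v) \<and> (T,EWR x,S)\<in>E}" for x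
  define WW where "WW x = {(T,S). T\<in>WriteTx Ts x \<and> S\<in>WriteTx Ts x \<and> (T,EWW x,S)\<in>E}" for x
  have d1: "\<forall>x. WR x \<subseteq> Ts \<times> Ts" by (auto simp: WR_def)
  have d2: "\<exists>!T. (T, S) \<in> WR x" if S: "S\<in>Ts" and rd: "reads S x v" for x S v
  proof -
    define C where "C = {(Ti, EWR x, S) | Ti. Ti \<in> Ts \<and> writes Ti x v}"
    have "C \<in> hp_CWR ?G" unfolding C_def hyper_polygraph_of_def using S rd by auto
    then have "\<exists>!e. e\<in>E \<inter> C" using one by blast
    then obtain e where e: "e \<in> E \<inter> C" and eu: "\<And>e'. e' \<in> E \<inter> C \<Longrightarrow> e' = e" by blast
    then obtain T where eT: "e = (T, EWR x, S)" "T \<in> Ts" "writes T x v" unfolding C_def by blast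
    have "(T,S) \<in> WR x" using e eT S rd unfolding WR_def by auto
    moreover have "T2 = T" if "(T2,S) \<in> WR x" for T2
    proof -
      from that obtain v2 where "T2 \<in> Ts" "reads S x v2" "writes T2 x v2" "(T2,EWR x,S)\<in>E"
        unfolding WR_def by auto
      moreover then have "v2 = v" using rd reads_fun by metis
      ultimately have "(T2,EWR x,S) \<in> E \<inter> C" unfolding C_def by auto
      then show ?thesis using eu eT by auto
    qed
    ultimately show ?thesis by blast
  qed
  have d3: "T \<noteq> S \<and> (\<exists>v. writes T x v \<and> reads S x v)" if "(T,S) \<in> WR x" for x T S
  proof -
    have "(T,EWR x,S)\<in>E" using that by (auto simp: WR_def)
    then have "(T,S) \<in> ?R" by (rule wrR)
    then have "T \<noteq> S" using acR acyc_self by metis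
    then show ?thesis using that by (auto simp: WR_def)
  qed
  have d4: "WW x \<subseteq> WriteTx Ts x \<times> WriteTx Ts x \<and> strict_linear_order_on (WriteTx Ts x) (WW x)" for x
  proof -
    have irr: "irrefl (WW x)" unfolding irrefl_def
    proof
      fix a show "(a,a) \<notin> WW x"
      proof
        assume "(a,a) \<in> WW x"
        then have "(a,EWW x,a) \<in> E" unfolding WW_def by simp
        then have "(a,a) \<in> ?R" by (rule wwR)
        then show False using acR acyc_self by metis
      qed
    qed
    have tot: "total_on (WriteTx Ts x) (WW x)"
      unfolding total_on_def
    proof (intro ballI impI)
      fix T S assume T: "T \<in> WriteTx Ts x" and S: "S \<in> WriteTx Ts x" and ne: "T \<noteq> S"
      have "{(T, EWW x, S), (S, EWW x, T)} \<in> hp_CWW ?G"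
        unfolding hyper_polygraph_of_def using T S ne by auto
      then have "\<exists>!e. e\<in>E \<inter> {(T, EWW x, S), (S, EWW x, T)}" using one by blast
      then obtain e where "e \<in> E \<inter> {(T, EWW x, S), (S, EWW x, T)}" by blast
      then have "(T, EWW x, S) \<in> E \<or> (S, EWW x, T) \<in> E" by blast
      then show "(T, S) \<in> WW x \<or> (S, T) \<in> WW x" using T S unfolding WW_def by blast
    qed
    have tr: "trans (WW x)"
    proof (rule transI)
      fix a b c assume ab: "(a,b) \<in> WW x" and bc: "(b,c) \<in> WW x"
      have abR: "(a,b) \<in> ?R" using ab wwR unfolding WW_def by blast
      have bcR: "(b,c) \<in> ?R" using bc wwR unfolding WW_def by blast
      have ac': "a \<noteq> c" using abR bcR acR acyc_2 by metis
      have "a \<in> WriteTx Ts x" "c \<in> WriteTx Ts x" using ab bc unfolding WW_def by auto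
      then have "(a,c) \<in> WW x \<or> (c,a) \<in> WW x" using tot ac' unfolding total_on_def by blast
      moreover have "(c,a) \<notin> WW x"
      proof
        assume "(c,a) \<in> WW x"
        then have "(c,a) \<in> ?R" using wwR unfolding WW_def by blast
        then show False using abR bcR acR acyc_3 by metis
      qed
      ultimately show "(a,c) \<in> WW x" by blast
    qed
    have "WW x \<subseteq> WriteTx Ts x \<times> WriteTx Ts x" unfolding WW_def by blast
    then show ?thesis using irr tot tr unfolding strict_linear_order_on_def by blast
  qed
  have dg: "dep_graph Ts WR WW"
    unfolding dep_graph_def using d1 d2 d3 d4 by blast
  have sub: "(SO \<union> (\<Union>x. WR x) \<union> (\<Union>x. WW x)) O (\<Union>x. RW_of WR WW x)\<^sup>= \<subseteq> ?R"
  proof -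
    have "SO \<subseteq> E_SO E" using hE unfolding hyper_polygraph_of_def E_SO_def by auto
    moreover have "(\<Union>x. WR x) \<subseteq> E_WR E" unfolding WR_def E_WR_def by auto
    moreover have "(\<Union>x. WW x) \<subseteq> E_WW E" unfolding WW_def E_WW_def by auto
    moreover have "(\<Union>x. RW_of WR WW x) \<subseteq> E_RW E"
      unfolding RW_of_def E_RW_def WR_def WW_def using rw by blast
    ultimately show ?thesis by blast
  qed
  have "acyclic ((SO \<union> (\<Union>x. WR x) \<union> (\<Union>x. WW x)) O (\<Union>x. RW_of WR WW x)\<^sup>=)"
    using acyclic_subset[OF acR sub] .
  then show ?thesis unfolding SI_def using int dg by blast
qed

lemma forth:
  assumes h: "history Ts SO" and si: "SI Ts SO"
  shows "\<exists>VE. compatible (hyper_polygraph_of Ts SO) VE \<and> acyclic (snd (induced_SI_graph VE))"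
proof -
  let ?G = "hyper_polygraph_of Ts SO"
  obtain WR WW where dg: "dep_graph Ts WR WW" and
    ac: "acyclic ((SO \<union> (\<Union>x. WR x) \<union> (\<Union>x. WW x)) O (\<Union>x. RW_of WR WW x)\<^sup>=)"
    using si unfolding SI_def by blast
  have d1: "\<And>x. WR x \<subseteq> Ts \<times> Ts" using dg unfolding dep_graph_def by blast
  have d2: "\<And>x S v. S\<in>Ts \<Longrightarrow> reads S x v \<Longrightarrow> \<exists>!T. (T, S) \<in> WR x" using dg unfolding dep_graph_def by blast
  have d3: "\<And>x T S. (T, S) \<in> WR x \<Longrightarrow> T \<noteq> S \<and> (\<exists>v. writes T x v \<and> reads S x v)"
    using dg unfolding dep_graph_def by blast
  have d4: "\<And>x. WW x \<subseteq> WriteTx Ts x \<times> WriteTx Ts x \<and> strict_linear_order_on (WriteTx Ts x) (WW x)"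
    using dg unfolding dep_graph_def by blast
  have SOs: "SO \<subseteq> Ts \<times> Ts" using history_SO[OF h] .
  have WTs: "WriteTx Ts x \<subseteq> Ts" for x unfolding WriteTx_def by auto
  define E where "E = {(T,ESO,S)|T S. (T,S)\<in>SO} \<union> {(T,EWR x,S)|T x S. (T,S)\<in>WR x}
     \<union> {(T,EWW x,S)|T x S. (T,S)\<in>WW x} \<union> {(T,ERW x,S)|T x S. (T,S)\<in>RW_of WR WW x}"
  have eSO: "E_SO E = SO" unfolding E_SO_def E_def by auto
  have eWR: "E_WR E = (\<Union>x. WR x)" unfolding E_WR_def E_def by auto
  have eWW: "E_WW E = (\<Union>x. WW x)" unfolding E_WW_def E_def by auto
  have eRW: "E_RW E = (\<Union>x. RW_of WR WW x)" unfolding E_RW_def E_def by auto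
  have acyc: "acyclic (snd (induced_SI_graph (Ts, E)))"
    using ac by (simp add: induced_SI_graph_def eSO eWR eWW eRW)
  have c1: "\<forall>(T, l, S)\<in>E. T \<in> Ts \<and> S \<in> Ts"
  proof -
    have "\<And>x. RW_of WR WW x \<subseteq> Ts \<times> Ts" unfolding RW_of_def using d1 d4 WTs by blast
    then show ?thesis unfolding E_def using SOs d1 d4 WTs by blast
  qed
  have c2: "hp_E ?G \<subseteq> E"
  proof
    fix e assume "e \<in> hp_E ?G"
    then have "e \<in> {(T, ESO, S) | T S. (T, S) \<in> SO} \<union>
              {(T, EWR x, S) | T x S. S \<in> Ts \<and> (\<exists>v. reads S x v \<and>
                  T \<in> Ts \<and> writes T x v \<and> (\<forall>T'\<in>Ts. writes T' x v \<longrightarrow> T' = T))}"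
      by (simp add: hyper_polygraph_of_def)
    then consider (a) T S where "e = (T,ESO,S)" "(T,S)\<in>SO"
      | (b) T x S v where "e = (T,EWR x,S)" "S \<in> Ts" "reads S x v" "T \<in> Ts" "writes T x v"
          "\<forall>T'\<in>Ts. writes T' x v \<longrightarrow> T' = T"
      by blast
    then show "e \<in> E"
    proof cases
      case a then show ?thesis unfolding E_def by auto
    next
      case b
      obtain T0 where T0: "(T0,S) \<in> WR x" using d2 b by blast
      then obtain v' where "writes T0 x v'" "reads S x v'" using d3 by blast
      moreover have "T0 \<in> Ts" using T0 d1 by blast
      ultimately have "T0 = T" using b reads_fun by metis
      then show ?thesis using T0 b unfolding E_def by blast
    qed
  qed
  have c3: "\<forall>x T T' S. T \<noteq> S \<and> (T', EWR x, T) \<in> E \<and> (T', EWW x, S) \<in> E \<longrightarrow> (T, ERW x, S) \<in> E"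
    unfolding E_def RW_of_def by auto
  have c4: "\<exists>!e. e \<in> E \<inter> C" if C: "C \<in> hp_CWW ?G \<union> hp_CWR ?G" for C
  proof -
    from C consider (a) T S x where "C = {(T, EWW x, S), (S, EWW x, T)}" "T \<noteq> S"
          "T \<in> WriteTx Ts x" "S \<in> WriteTx Ts x"
      | (b) S x v where "C = {(Ti, EWR x, S) | Ti. Ti \<in> Ts \<and> writes Ti x v}" "S \<in> Ts" "reads S x v"
    proof -
      have "C \<in> {{(T, EWW x, S), (S, EWW x, T)} | T S x.
                   T \<noteq> S \<and> T \<in> WriteTx Ts x \<and> S \<in> WriteTx Ts x} \<union>
             {{(Ti, EWR x, S) | Ti. Ti \<in> Ts \<and> writes Ti x v} | S x v.
                   S \<in> Ts \<and> reads S x v}" using C by (simp add: hyper_polygraph_of_def)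
      then show ?thesis using that by blast
    qed
    then show ?thesis
    proof cases
      case a
      have so: "strict_linear_order_on (WriteTx Ts x) (WW x)" using d4 by blast
      then have "(T,S) \<in> WW x \<or> (S,T) \<in> WW x" using a unfolding strict_linear_order_on_def total_on_def by blast
      moreover have "\<not> ((T,S) \<in> WW x \<and> (S,T) \<in> WW x)"
        using so unfolding strict_linear_order_on_def irrefl_def trans_def by blast
      ultimately show ?thesis using a unfolding E_def by auto
    next
      case b
      obtain T0 where T0: "(T0,S) \<in> WR x" and u: "\<And>T2. (T2,S) \<in> WR x \<Longrightarrow> T2 = T0"
        using d2 b by blast
      then obtain v' where "writes T0 x v'" "reads S x v'" using d3 by blast
      then have wT0: "writes T0 x v" using b reads_fun by metis
      have T0s: "T0 \<in> Ts" using T0 d1 by blast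
      have "(T0, EWR x, S) \<in> E \<inter> C" using T0 T0s wT0 b unfolding E_def by auto
      moreover have "e = (T0, EWR x, S)" if "e \<in> E \<inter> C" for e
        using that b u unfolding E_def by auto
      ultimately show ?thesis by blast
    qed
  qed
  have hv: "hp_V ?G = Ts" by (simp add: hyper_polygraph_of_def)
  have "compatible ?G (Ts, E)"
    unfolding compatible_def prod.case hv using c1 c2 c3 c4 by blast
  then show ?thesis using acyc by blast
qed

theorem theoremA2:
  fixes Ts :: "('k, 'v) txn set" and SO :: "('k, 'v) txn rel"
  assumes "history Ts SO"
  shows "SI Ts SO \<longleftrightarrow>
           Int_axiom Ts \<and>
           (\<exists>VE. compatible (hyper_polygraph_of Ts SO) VE \<and> acyclic (snd (induced_SI_graph VE)))"
proof
  assume "SI Ts SO"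
  then show "Int_axiom Ts \<and> (\<exists>VE. compatible (hyper_polygraph_of Ts SO) VE \<and> acyclic (snd (induced_SI_graph VE)))"
    using forth[OF assms] unfolding SI_def by blast
next
  assume a: "Int_axiom Ts \<and> (\<exists>VE. compatible (hyper_polygraph_of Ts SO) VE \<and> acyclic (snd (induced_SI_graph VE)))"
  then obtain V E where "compatible (hyper_polygraph_of Ts SO) (V,E)" "acyclic (snd (induced_SI_graph (V,E)))"
    by (metis prod.collapse)
  then show "SI Ts SO" using si_back a by blast
qed

end
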